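(* Let $x$ be a random variable with values in $[-1,1]$, and for $\eta>0$ let $\epsilon(\eta)=\frac1\eta\ln\mathbb E[e^{-\eta x}]$. Then for every $\eta>0$, \[ \frac1\eta\ln\mathbb E\big[e^{c\eta^2x^2-\eta x}\big]\;\le\;\epsilon(2\eta)+c\,\eta\,\epsilon(2\eta)^2,\qquad\text{where } c=\frac{1}{1+\sqrt{1+4\eta^2}}. \] *)

theory Defs
  imports "HOL-Probability.Probability"
begin

definition eps_fun :: "'a measure \<Rightarrow> ('a \<Rightarrow> real) \<Rightarrow> real \<Rightarrow> real" where
  "eps_fun M X \<eta> = (1 / \<eta>) * ln (prob_space.expectation M (\<lambda>\<omega>. exp (- \<eta> * X \<omega>)))"

end

theory Submission
  imports Defs
begin

definition phi :: "real \<Rightarrow> real \<Rightarrow> real" where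
  "phi c t = exp (c * (ln t)^2 / 4 + ln t / 2)"
definition phi1 :: "real \<Rightarrow> real \<Rightarrow> real" where
  "phi1 c t = phi c t * (c * ln t / 2 + 1/2) / t"
definition phi2 :: "real \<Rightarrow> real \<Rightarrow> real" where
  "phi2 c t = phi c t * ((c * ln t / 2 + 1/2)^2 - (c * ln t / 2 + 1/2) + c / 2) / t^2"

lemma phi_deriv: "t > 0 \<Longrightarrow> DERIV (phi c) t :> phi1 c t"
  unfolding phi_def phi1_def
  by (rule derivative_eq_intros refl | simp)+ (simp add: field_simps power2_eq_square)

lemma phi1_deriv: "t > 0 \<Longrightarrow> DERIV (phi1 c) t :> phi2 c t"
  unfolding phi1_def phi2_def phi_def
  by (rule derivative_eq_intros refl | simp)+ (simp add: field_simps power2_eq_square)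

lemma c_facts:
  assumes "\<eta> > 0" "c = 1 / (1 + sqrt (1 + 4 * \<eta>^2))"
  shows "c > 0" "4 * c^2 * \<eta>^2 + 2 * c - 1 = 0"
proof -
  define s where "s = sqrt (1 + 4 * \<eta>^2)"
  have s0: "s \<ge> 0" unfolding s_def by simp
  have s2: "s^2 = 1 + 4 * \<eta>^2" unfolding s_def by simp
  have c: "c * (1 + s) = 1" using assms(2) s0 unfolding s_def[symmetric] by simp
  show "c > 0" using assms(2) s0 unfolding s_def[symmetric] by simp
  have "4 * c^2 * \<eta>^2 = c^2 * (s^2 - 1)" using s2 by simp
  also have "\<dots> = c * (s - 1) * (c * (1 + s))" by (simp add: algebra_simps power2_eq_square)
  also have "\<dots> = c * (s - 1)" using c by simp
  finally show "4 * c^2 * \<eta>^2 + 2 * c - 1 = 0" using c by (simp add: algebra_simps)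
qed

lemma phi2_nonpos:
  assumes "\<eta> > 0" "c > 0" "4 * c^2 * \<eta>^2 + 2 * c - 1 = 0"
    and t: "exp (-(2*\<eta>)) \<le> t" "t \<le> exp (2*\<eta>)"
  shows "phi2 c t \<le> 0"
proof -
  have tp: "t > 0" using t(1) by (meson exp_gt_zero less_le_trans)
  have "ln t \<ge> -(2*\<eta>)" using t(1) tp by (metis ln_exp ln_le_cancel_iff exp_gt_zero)
  moreover have "ln t \<le> 2*\<eta>" using t(2) tp by (metis ln_exp ln_le_cancel_iff exp_gt_zero)
  ultimately have "\<bar>ln t\<bar> \<le> 2 * \<eta>" by auto
  hence "(ln t)^2 \<le> (2*\<eta>)^2" by (metis abs_le_square_iff abs_of_pos assms(1) mult_pos_pos zero_less_numeral abs_abs)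
  hence "c^2 * (ln t)^2 \<le> c^2 * (2*\<eta>)^2" by (simp add: mult_left_mono)
  hence "(c * ln t / 2 + 1/2)^2 - (c * ln t / 2 + 1/2) + c / 2 \<le> 0"
    using assms(3) by (simp add: power2_eq_square algebra_simps)
  moreover have "phi c t \<ge> 0" unfolding phi_def by simp
  ultimately show ?thesis unfolding phi2_def
    by (intro divide_nonpos_pos mult_nonneg_nonpos) (use tp in auto)
qed

lemma tangent:
  assumes "\<eta> > 0" "c > 0" "4 * c^2 * \<eta>^2 + 2 * c - 1 = 0"
    and t: "exp (-(2*\<eta>)) \<le> t" "t \<le> exp (2*\<eta>)"
    and m: "exp (-(2*\<eta>)) \<le> m" "m \<le> exp (2*\<eta>)"
  shows "phi c t \<le> phi c m + phi1 c m * (t - m)"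
proof -
  have pos: "\<And>x. exp (-(2*\<eta>)) \<le> x \<Longrightarrow> x > 0" by (meson exp_gt_zero less_le_trans)
  have anti: "phi1 c b \<le> phi1 c a" if "exp (-(2*\<eta>)) \<le> a" "a \<le> b" "b \<le> exp (2*\<eta>)" for a b
    apply (rule DERIV_nonpos_imp_nonincreasing[OF that(2)])
    using that phi1_deriv phi2_nonpos[OF assms(1-3)] pos by (meson order_trans)
  consider "t = m" | "m < t" | "t < m" by linarith
  then show ?thesis
  proof cases
    case 1 then show ?thesis by simp
  next
    case 2
    obtain z where z: "m < z" "z < t" "phi c t - phi c m = (t - m) * phi1 c z"
      using MVT2[OF 2, of "phi c" "phi1 c"] phi_deriv m pos by (meson order_trans)
    have "phi1 c z \<le> phi1 c m" using anti[of m z] z m t by linarith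
    hence "(t - m) * phi1 c z \<le> (t - m) * phi1 c m" using 2 by (simp add: mult_left_mono)
    then show ?thesis using z by (simp add: algebra_simps)
  next
    case 3
    obtain z where z: "t < z" "z < m" "phi c m - phi c t = (m - t) * phi1 c z"
      using MVT2[OF 3, of "phi c" "phi1 c"] phi_deriv t pos by (meson order_trans)
    have "phi1 c m \<le> phi1 c z" using anti[of z m] z m t by linarith
    hence "(m - t) * phi1 c m \<le> (m - t) * phi1 c z" using 3 by (simp add: mult_left_mono)
    then show ?thesis using z by (simp add: algebra_simps)
  qed
qed


theorem mainTheorem9:
  fixes M :: "'a measure" and X :: "'a \<Rightarrow> real" and \<eta> :: real
  assumes "prob_space M"
    and "X \<in> borel_measurable M"
    and "\<forall>\<omega>\<in>space M. X \<omega> \<in> {-1..1}"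
    and "\<eta> > 0"
  shows "(let c = 1 / (1 + sqrt (1 + 4 * \<eta>^2)) in
          (1 / \<eta>) * ln (prob_space.expectation M (\<lambda>\<omega>. exp (c * \<eta>^2 * (X \<omega>)^2 - \<eta> * X \<omega>)))
          \<le> eps_fun M X (2 * \<eta>) + c * \<eta> * (eps_fun M X (2 * \<eta>))^2)"
proof -
  interpret prob_space M by fact
  define c where "c = 1 / (1 + sqrt (1 + 4 * \<eta>^2))"
  have c0: "c > 0" and ceq: "4 * c^2 * \<eta>^2 + 2 * c - 1 = 0"
    using c_facts[OF assms(4) c_def] by auto
  define T where "T = (\<lambda>\<omega>. exp (- (2 * \<eta>) * X \<omega>))"
  define A where "A = exp (-(2*\<eta>))"
  define B where "B = exp (2*\<eta>)"
  have Xb: "-1 \<le> X \<omega>" "X \<omega> \<le> 1" if "\<omega> \<in> space M" for \<omega> using assms(3) that by auto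
  have Xe: "-\<eta> \<le> \<eta> * X \<omega>" "\<eta> * X \<omega> \<le> \<eta>" if "\<omega> \<in> space M" for \<omega>
    using mult_left_mono[OF Xb(1)[OF that], of \<eta>] mult_left_mono[OF Xb(2)[OF that], of \<eta>] assms(4) by auto
  have TA: "A \<le> T \<omega>" and TB: "T \<omega> \<le> B" if "\<omega> \<in> space M" for \<omega>
    using Xe[OF that] unfolding A_def B_def T_def by auto
  have Tm: "T \<in> borel_measurable M" unfolding T_def using assms(2) by measurable
  have Tint: "integrable M T"
    by (rule integrable_const_bound[where B=B]) (use TB Tm in \<open>auto intro!: AE_I2 simp: T_def\<close>)
  have phiT: "phi c (T \<omega>) = exp (c * \<eta>^2 * (X \<omega>)^2 - \<eta> * X \<omega>)" for \<omega>
    unfolding phi_def T_def by (simp add: power2_eq_square algebra_simps)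
  define F where "F = (\<lambda>\<omega>. exp (c * \<eta>^2 * (X \<omega>)^2 - \<eta> * X \<omega>))"
  have Fm: "F \<in> borel_measurable M" unfolding F_def using assms(2) by measurable
  have Fb: "F \<omega> \<le> exp (c * \<eta>^2 + \<eta>)" if "\<omega> \<in> space M" for \<omega>
  proof -
    have "(X \<omega>)^2 \<le> 1" using Xb[OF that] by (simp add: abs_square_le_1 abs_le_iff)
    hence "c * \<eta>^2 * (X \<omega>)^2 \<le> c * \<eta>^2" using c0 by (simp add: mult_left_le)
    moreover have "- \<eta> * X \<omega> \<le> \<eta>" using Xe[OF that] by simp
    ultimately show ?thesis unfolding F_def by simp
  qed
  have Fint: "integrable M F"
    by (rule integrable_const_bound[where B="exp (c * \<eta>^2 + \<eta>)"]) (use Fb Fm in \<open>auto intro!: AE_I2 simp: F_def\<close>)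
  define m where "m = expectation T"
  have mA: "A \<le> m" unfolding m_def by (rule integral_ge_const[OF Tint]) (use TA in auto)
  have mB: "m \<le> B" unfolding m_def by (rule integral_le_const[OF Tint]) (use TB in auto)
  have mpos: "m > 0" using mA unfolding A_def by (meson exp_gt_zero less_le_trans)
  have tan: "F \<omega> \<le> phi c m + phi1 c m * (T \<omega> - m)" if "\<omega> \<in> space M" for \<omega>
    using tangent[OF assms(4) c0 ceq, of "T \<omega>" m] TA[OF that] TB[OF that] mA mB phiT
    unfolding A_def B_def F_def by auto
  have "expectation F \<le> expectation (\<lambda>\<omega>. phi c m + phi1 c m * (T \<omega> - m))"
    by (rule integral_mono[OF Fint]) (use Tint tan in auto)
  also have "\<dots> = phi c m"
    using Tint prob_space by (simp add: integral_add integral_mult_right integral_diff m_def algebra_simps)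
  finally have Fle: "expectation F \<le> phi c m" .
  have Fpos: "expectation F > 0"
  proof -
    have "exp (-\<eta>) \<le> expectation F"
    proof (rule integral_ge_const[OF Fint], rule AE_I2)
      fix \<omega> assume w: "\<omega> \<in> space M"
      have "0 \<le> c * \<eta>^2 * (X \<omega>)^2" using c0 by simp
      moreover have "- \<eta> * X \<omega> \<ge> -\<eta>" using Xe[OF w] by simp
      ultimately show "exp (-\<eta>) \<le> F \<omega>" unfolding F_def by simp
    qed
    then show ?thesis by (meson exp_gt_zero less_le_trans)
  qed
  have "ln (expectation F) \<le> ln (phi c m)" using Fle Fpos by simp
  also have "\<dots> = c * (ln m)^2 / 4 + ln m / 2" unfolding phi_def by simp
  finally have L: "ln (expectation F) \<le> c * (ln m)^2 / 4 + ln m / 2" .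
  have eps: "eps_fun M X (2 * \<eta>) = ln m / (2 * \<eta>)"
    unfolding eps_fun_def m_def T_def by simp
  have "(1 / \<eta>) * ln (expectation F) \<le> (1 / \<eta>) * (c * (ln m)^2 / 4 + ln m / 2)"
    using L assms(4) by (simp add: divide_right_mono)
  also have "\<dots> = eps_fun M X (2 * \<eta>) + c * \<eta> * (eps_fun M X (2 * \<eta>))^2"
    unfolding eps using assms(4) by (simp add: field_simps power2_eq_square)
  finally show ?thesis unfolding c_def[symmetric] F_def Let_def .
qed

end
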